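(* Fix $n$, generators $x_{i_1},\dots,x_{i_k}\in\mathcal{B}_n$, an index $j$, integers $a_h$ ($h\ne j$), and set $V(e)=V_n(x_{i_1}^{a_1}\cdots x_{i_j}^{e}\cdots x_{i_k}^{a_k})$ for $e\in\mathbb{Z}$. (a) If $V(e)$ and $V(e+1)$ are polynomials in $s$ and $k\ge2$, then $V(e+k)$ is a polynomial in $s$ different from $1$. (b) If $V(e)$ and $V(e-1)$ are polynomials in $s^{-1}$ and $k\ge2$, then $V(e-k)$ is a polynomial in $s^{-1}$ different from $1$.
   Context: $\mathcal{B}_n$ is the Artin braid group with generators $x_1,\dots,x_{n-1}$; $V_n(\beta)$ is the Jones polynomial of the closure of $\beta$, normalized by $V(\text{unknot})=1$ and $q^{-1}V_{L_+}-qV_{L_-}=(q^{1/2}-q^{-1/2})V_{L_0}$, as a Laurent polynomial in $s=q^{-1/2}$. Conventions: closures of $\alpha x_i^{e+2}\gamma$, $\alpha x_i^{e+1}\gamma$, $\alpha x_i^{e}\gamma$ play the roles of $L_-,L_0,L_+$ (e.g. the closure of $x_1^2\in\mathcal B_2$ has Jones polynomial $-s-s^5$). In (a) and (b), $k$ denotes an integer step (not the number of factors). *)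

theory Defs
  imports "HOL-Computational_Algebra.Formal_Laurent_Series"
begin

text \<open>Braid words.  A letter (i, True) is the Artin generator x_i, a letter (i, False)
  is its inverse.  Strands are numbered 1..n.\<close>

type_synonym braid_word = "(nat \<times> bool) list"

definition gen_power :: "nat \<Rightarrow> int \<Rightarrow> braid_word" where
  "gen_power i e = (if e \<ge> 0 then replicate (nat e) (i, True) else replicate (nat (- e)) (i, False))"

definition word_of_powers :: "nat \<Rightarrow> (nat \<Rightarrow> nat) \<Rightarrow> (nat \<Rightarrow> int) \<Rightarrow> braid_word" where
  "word_of_powers m i ex = concat (map (\<lambda>h. gen_power (i h) (ex h)) [0..<m])"

text \<open>Kauffman states of the closure of a braid word w: a set S of positions of letters
  that receive the horizontal (cup-cap, e_i) smoothing; the others receive the vertical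
  (identity) smoothing.  The smoothed closed diagram is encoded as a graph on the points
  (t, p), t = 0..length w (level t lies just below letter t), p = 1..n; level length w is
  glued to level 0 (braid closure).\<close>

definition smoothing_edges :: "nat \<Rightarrow> braid_word \<Rightarrow> nat set \<Rightarrow> ((nat \<times> nat) \<times> (nat \<times> nat)) set" where
  "smoothing_edges n w S =
     {((length w, p), (0, p)) | p. 1 \<le> p \<and> p \<le> n}
   \<union> {((t, p), (Suc t, p)) | t p. t < length w \<and> 1 \<le> p \<and> p \<le> n \<and>
          (t \<notin> S \<or> (p \<noteq> fst (w ! t) \<and> p \<noteq> Suc (fst (w ! t))))}
   \<union> {((t, fst (w ! t)), (t, Suc (fst (w ! t)))) | t. t < length w \<and> t \<in> S}
   \<union> {((Suc t, fst (w ! t)), (Suc t, Suc (fst (w ! t)))) | t. t < length w \<and> t \<in> S}"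

definition state_points :: "nat \<Rightarrow> braid_word \<Rightarrow> (nat \<times> nat) set" where
  "state_points n w = {0..length w} \<times> {1..n}"

definition state_loops :: "nat \<Rightarrow> braid_word \<Rightarrow> nat set \<Rightarrow> nat" where
  "state_loops n w S =
     card (state_points n w // ((smoothing_edges n w S \<union> (smoothing_edges n w S)\<inverse>)\<^sup>*))"

text \<open>Writhe: with the paper's conventions (closure of x_1^2 in B_2 has Jones polynomial
  -s-s^5), the generator x_i is a negative crossing.\<close>
definition writhe :: "braid_word \<Rightarrow> int" where
  "writhe w = (\<Sum>t<length w. if snd (w ! t) then -1 else 1)"

text \<open>Kauffman bracket exponent a(S) - b(S): bracket of x_i is A^{-1}(id) + A(e_i),
  bracket of x_i^{-1} is A(id) + A^{-1}(e_i).\<close>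
definition state_A_exp :: "braid_word \<Rightarrow> nat set \<Rightarrow> int" where
  "state_A_exp w S = (\<Sum>t<length w. (if t \<in> S then 1 else -1) * (if snd (w ! t) then 1 else -1))"

text \<open>Jones polynomial of the closure of w in B_n, as a Laurent polynomial in s = q^{-1/2}
  (an element of int fls whose variable fls_X is s).  It is
  (-A^3)^{-writhe} * sum_S A^{a(S)-b(S)} (-A^2-A^{-2})^{loops(S)-1} with A^2 = s;
  the total A-exponent a(S)-b(S)-3 writhe is always even, so the division by 2 is exact.\<close>
definition jones :: "nat \<Rightarrow> braid_word \<Rightarrow> int fls" where
  "jones n w = (\<Sum>S\<in>Pow {..<length w}.
      (-1) ^ nat \<bar>writhe w\<bar>
      * fls_X_intpow ((state_A_exp w S - 3 * writhe w) div 2)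
      * (- fls_X - fls_X_inv) ^ (state_loops n w S - 1))"

definition is_poly_in_s :: "int fls \<Rightarrow> bool" where
  "is_poly_in_s f \<longleftrightarrow> (\<forall>d < 0. fls_nth f d = 0)"

definition is_poly_in_s_inv :: "int fls \<Rightarrow> bool" where
  "is_poly_in_s_inv f \<longleftrightarrow> (\<forall>d > 0. fls_nth f d = 0)"

end

theory Submission
  imports Defs
begin


lemma symR: "sym ((E \<union> E\<inverse>)\<^sup>*)"
  by (rule sym_rtrancl[OF sym_Un_converse])
lemma equiv_rtc_sym: "equiv UNIV ((E \<union> E\<inverse>)\<^sup>*)"
  unfolding equiv_def by (simp add: symR refl_rtrancl trans_rtrancl)

lemma class_eq_iff: "((E \<union> E\<inverse>)\<^sup>*) `` {x} = ((E \<union> E\<inverse>)\<^sup>*) `` {y} \<longleftrightarrow> (x,y) \<in> (E \<union> E\<inverse>)\<^sup>*"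
  by (simp add: equiv_class_eq_iff[OF equiv_rtc_sym])

lemma sym_step: "(x,y) \<in> (E \<union> E\<inverse>)\<^sup>* \<Longrightarrow> (y,x) \<in> (E \<union> E\<inverse>)\<^sup>*"
  using symR by (rule symD)

lemma card_image_eq_rel:
  assumes "\<forall>x\<in>A. \<forall>y\<in>A. f x = f y \<longleftrightarrow> g x = g y"
  shows "card (f`A) = card (g`A)"
proof -
  have "g`A = (\<lambda>X. g (inv_into A f X)) ` (f`A)"
  proof -
    have "\<And>x. x\<in>A \<Longrightarrow> g (inv_into A f (f x)) = g x"
      using assms by (metis inv_into_into f_inv_into_f image_eqI)
    thus ?thesis by (auto simp: image_iff)
  qed
  moreover have "inj_on (\<lambda>X. g (inv_into A f X)) (f`A)"
  proof (rule inj_onI)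
    fix X Y assume X: "X \<in> f`A" and Y: "Y \<in> f`A" and e: "g (inv_into A f X) = g (inv_into A f Y)"
    have iX: "inv_into A f X \<in> A" "f (inv_into A f X) = X" using X by (auto intro: inv_into_into f_inv_into_f)
    have iY: "inv_into A f Y \<in> A" "f (inv_into A f Y) = Y" using Y by (auto intro: inv_into_into f_inv_into_f)
    show "X = Y" using assms iX iY e by metis
  qed
  ultimately show ?thesis by (simp add: card_image)
qed

lemma card_quot_eq:
  fixes \<phi> :: "'a \<Rightarrow> 'b"
  assumes surj: "\<phi> ` A = B"
    and EA: "\<And>a b. (a,b)\<in>EA \<Longrightarrow> a\<in>A \<and> b\<in>A \<and> (\<phi> a, \<phi> b) \<in> (EB \<union> EB\<inverse>)\<^sup>*"
    and EB: "\<And>c d. (c,d)\<in>EB \<Longrightarrow> \<exists>a\<in>A. \<exists>b\<in>A. \<phi> a = c \<and> \<phi> b = d \<and> (a,b) \<in> (EA \<union> EA\<inverse>)\<^sup>*"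
    and fib: "\<And>a b. a\<in>A \<Longrightarrow> b\<in>A \<Longrightarrow> \<phi> a = \<phi> b \<Longrightarrow> (a,b) \<in> (EA \<union> EA\<inverse>)\<^sup>*"
  shows "card (A // (EA \<union> EA\<inverse>)\<^sup>*) = card (B // (EB \<union> EB\<inverse>)\<^sup>*)"
proof -
  let ?RA = "(EA \<union> EA\<inverse>)\<^sup>*" and ?RB = "(EB \<union> EB\<inverse>)\<^sup>*"
  have s1: "b\<in>A \<and> (\<phi> a, \<phi> b) \<in> ?RB" if "(a,b)\<in>?RA" "a\<in>A" for a b
    using that(1)
  proof (induction rule: rtrancl_induct)
    case base then show ?case using that(2) by simp
  next
    case (step y z)
    have "y\<in>A \<and> z\<in>A \<and> (\<phi> y, \<phi> z) \<in> ?RB"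
    proof (cases "(y,z)\<in>EA")
      case True then show ?thesis using EA by blast
    next
      case False then have "(z,y)\<in>EA" using step(2) by blast
      then show ?thesis using EA[of z y] sym_step[of "\<phi> z" "\<phi> y" EB] by blast
    qed
    then show ?case using step(3) rtrancl_trans by fast
  qed
  have s2: "\<exists>b\<in>A. \<phi> b = d \<and> (a,b)\<in>?RA" if "(c,d)\<in>?RB" "a\<in>A" "\<phi> a = c" for a c d
    using that(1)
  proof (induction rule: rtrancl_induct)
    case base then show ?case using that by blast
  next
    case (step y z)
    then obtain b where b: "b\<in>A" "\<phi> b = y" "(a,b)\<in>?RA" by blast
    have "\<exists>a'\<in>A. \<exists>b'\<in>A. \<phi> a' = y \<and> \<phi> b' = z \<and> (a',b')\<in>?RA"
    proof (cases "(y,z)\<in>EB")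
      case True then show ?thesis using EB by blast
    next
      case False then have "(z,y)\<in>EB" using step(2) by blast
      then obtain a' b' where "a'\<in>A" "b'\<in>A" "\<phi> a' = z" "\<phi> b' = y" "(a',b')\<in>?RA" using EB by blast
      then show ?thesis using sym_step[of a' b' EA] by blast
    qed
    then obtain a' b' where ab: "a'\<in>A" "b'\<in>A" "\<phi> a' = y" "\<phi> b' = z" "(a',b')\<in>?RA" by blast
    have "(b,a')\<in>?RA" using fib b ab by metis
    then show ?case using b ab rtrancl_trans by metis
  qed
  have iff: "(a,b)\<in>?RA \<longleftrightarrow> (\<phi> a, \<phi> b)\<in>?RB" if hab: "a\<in>A" "b\<in>A" for a b
  proof
    assume "(a,b)\<in>?RA" then show "(\<phi> a, \<phi> b)\<in>?RB" using s1 hab by blast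
  next
    assume "(\<phi> a, \<phi> b)\<in>?RB"
    then obtain b' where "b'\<in>A" "\<phi> b' = \<phi> b" "(a,b')\<in>?RA" using s2 hab by blast
    moreover have "(b',b)\<in>?RA" using fib calculation hab by blast
    ultimately show "(a,b)\<in>?RA" using rtrancl_trans by metis
  qed
  have qa: "A // ?RA = (\<lambda>a. ?RA``{a}) ` A" unfolding quotient_def by blast
  have qb: "B // ?RB = (\<lambda>a. ?RB``{\<phi> a}) ` A" unfolding quotient_def using surj by blast
  show ?thesis unfolding qa qb
    by (rule card_image_eq_rel) (simp add: class_eq_iff iff)
qed

lemma card_quot_insert:
  assumes "finite B" "z \<notin> B" "\<And>c d. (c,d)\<in>E \<Longrightarrow> c \<noteq> z \<and> d \<noteq> z"
  shows "card (insert z B // (E \<union> E\<inverse>)\<^sup>*) = Suc (card (B // (E \<union> E\<inverse>)\<^sup>*))"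
proof -
  let ?R = "(E \<union> E\<inverse>)\<^sup>*"
  have z: "?R``{z} = {z}"
  proof -
    have "y = z" if "(z,y)\<in>?R" for y
      using that
    proof (induction rule: rtrancl_induct)
      case base then show ?case by simp
    next
      case (step y w) then show ?case using assms(3) by blast
    qed
    thus ?thesis by auto
  qed
  have q: "insert z B // ?R = insert {z} (B // ?R)" unfolding quotient_def using z by blast
  have nin: "{z} \<notin> B // ?R"
  proof
    assume "{z} \<in> B // ?R"
    then obtain x where "x\<in>B" "{z} = ?R``{x}" unfolding quotient_def by blast
    then show False using assms(2) by (metis rtrancl.rtrancl_refl Image_singleton_iff singletonD)
  qed
  have "finite (B // ?R)" unfolding quotient_def using assms(1) by simp
  then show ?thesis unfolding q using nin by simp
qed



definition edgesF :: "nat \<Rightarrow> nat \<Rightarrow> (nat \<Rightarrow> nat \<times> bool) \<Rightarrow> ((nat \<times> nat) \<times> (nat \<times> nat)) set" where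
  "edgesF n N f =
     {((N, p), (0, p)) | p. 1 \<le> p \<and> p \<le> n}
   \<union> {((t, p), (Suc t, p)) | t p. t < N \<and> 1 \<le> p \<and> p \<le> n \<and>
          (\<not> snd (f t) \<or> (p \<noteq> fst (f t) \<and> p \<noteq> Suc (fst (f t))))}
   \<union> {((t, fst (f t)), (t, Suc (fst (f t)))) | t. t < N \<and> snd (f t)}
   \<union> {((Suc t, fst (f t)), (Suc t, Suc (fst (f t)))) | t. t < N \<and> snd (f t)}"

definition LF :: "nat \<Rightarrow> nat \<Rightarrow> (nat \<Rightarrow> nat \<times> bool) \<Rightarrow> nat" where
  "LF n N f = card (({0..N} \<times> {1..n}) // (edgesF n N f \<union> (edgesF n N f)\<inverse>)\<^sup>*)"

lemma state_loops_LF: "state_loops n w S = LF n (length w) (\<lambda>t. (fst (w!t), t \<in> S))"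
  unfolding state_loops_def LF_def smoothing_edges_def edgesF_def state_points_def by simp

lemma edge_R: "(x,y) \<in> E \<Longrightarrow> (x,y) \<in> (E \<union> E\<inverse>)\<^sup>*" by auto

lemma eF1: "1 \<le> p \<Longrightarrow> p \<le> n \<Longrightarrow> ((N,p),(0,p)) \<in> edgesF n N f"
  unfolding edgesF_def by blast
lemma eF2: "t < N \<Longrightarrow> 1 \<le> p \<Longrightarrow> p \<le> n \<Longrightarrow> (\<not> snd (f t) \<or> (p \<noteq> fst (f t) \<and> p \<noteq> Suc (fst (f t))))
   \<Longrightarrow> ((t,p),(Suc t,p)) \<in> edgesF n N f"
  unfolding edgesF_def by blast
lemma eF3: "t < N \<Longrightarrow> snd (f t) \<Longrightarrow> ((t, fst (f t)),(t, Suc (fst (f t)))) \<in> edgesF n N f"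
  unfolding edgesF_def by blast
lemma eF4: "t < N \<Longrightarrow> snd (f t) \<Longrightarrow> ((Suc t, fst (f t)),(Suc t, Suc (fst (f t)))) \<in> edgesF n N f"
  unfolding edgesF_def by blast

lemma edgesF_E:
  assumes "(a,b) \<in> edgesF n N f"
  obtains (c1) p where "a = (N,p)" "b = (0,p)" "1 \<le> p" "p \<le> n"
  | (c2) t p where "a = (t,p)" "b = (Suc t,p)" "t < N" "1 \<le> p" "p \<le> n"
        "\<not> snd (f t) \<or> (p \<noteq> fst (f t) \<and> p \<noteq> Suc (fst (f t)))"
  | (c3) t where "a = (t, fst (f t))" "b = (t, Suc (fst (f t)))" "t < N" "snd (f t)"
  | (c4) t where "a = (Suc t, fst (f t))" "b = (Suc t, Suc (fst (f t)))" "t < N" "snd (f t)"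
  using assms unfolding edgesF_def by blast

lemma edgesF_in:
  assumes "(a,b) \<in> edgesF n N f" "\<forall>t<N. 1 \<le> fst (f t) \<and> fst (f t) < n"
  shows "a \<in> {0..N} \<times> {1..n} \<and> b \<in> {0..N} \<times> {1..n}"
  using assms(1)
proof (cases rule: edgesF_E)
  case (c3 t) then show ?thesis using assms(2) by auto
next
  case (c4 t) then show ?thesis using assms(2) by auto
qed auto

lemma edge_R': "(y,x) \<in> E \<Longrightarrow> (x,y) \<in> (E \<union> E\<inverse>)\<^sup>*" by auto

lemma LF_del:
  assumes k: "k \<le> N" and nk: "\<not> snd (f k)" and rng: "\<forall>t<Suc N. 1 \<le> fst (f t) \<and> fst (f t) < n"
  shows "LF n (Suc N) f = LF n N (\<lambda>t. if t < k then f t else f (Suc t))"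
proof -
  define g where "g = (\<lambda>t. if t < k then f t else f (Suc t))"
  define \<phi> :: "nat \<times> nat \<Rightarrow> nat \<times> nat" where "\<phi> = (\<lambda>(t,p). (if t \<le> k then t else t - 1, p))"
  have g1: "t < k \<Longrightarrow> g t = f t" and g2: "k \<le> t \<Longrightarrow> g t = f (Suc t)" for t by (auto simp: g_def)
  have \<phi>1: "t \<le> k \<Longrightarrow> \<phi> (t,p) = (t,p)" and \<phi>2: "k < t \<Longrightarrow> \<phi> (t,p) = (t - 1,p)" for t p
    by (auto simp: \<phi>_def)
  have rngg: "\<forall>t<N. 1 \<le> fst (g t) \<and> fst (g t) < n" using rng by (auto simp: g_def)
  let ?A = "{0..Suc N} \<times> {1..n}" and ?B = "{0..N} \<times> {1..n}"
  let ?EA = "edgesF n (Suc N) f" and ?EB = "edgesF n N g"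
  have "card (?A // (?EA \<union> ?EA\<inverse>)\<^sup>*) = card (?B // (?EB \<union> ?EB\<inverse>)\<^sup>*)"
  proof (rule card_quot_eq[where \<phi>=\<phi>])
    show "\<phi> ` ?A = ?B"
    proof
      show "\<phi> ` ?A \<subseteq> ?B" using k by (auto simp: \<phi>_def)
      show "?B \<subseteq> \<phi> ` ?A"
      proof
        fix x assume x: "x \<in> ?B"
        obtain t p where tp: "x = (t,p)" by fastforce
        show "x \<in> \<phi> ` ?A"
        proof (cases "t \<le> k")
          case True
          then have "(t,p) \<in> ?A" "\<phi> (t,p) = x" using x tp by (auto simp: \<phi>_def)
          then show ?thesis by (metis rev_image_eqI)
        next
          case False
          then have "(Suc t,p) \<in> ?A" "\<phi> (Suc t,p) = x" using x tp by (auto simp: \<phi>_def)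
          then show ?thesis by (metis rev_image_eqI)
        qed
      qed
    qed
  next
    fix a b assume ab: "(a,b) \<in> ?EA"
    have "\<phi> a = \<phi> b \<or> (\<phi> a, \<phi> b) \<in> ?EB"
      using ab
    proof (cases rule: edgesF_E)
      case (c1 p) then show ?thesis using k by (simp add: \<phi>1 \<phi>2 eF1)
    next
      case (c2 t p)
      consider "t = k" | "t < k" | "k < t" by linarith
      then show ?thesis
      proof cases
        case 1 then show ?thesis using c2 by (simp add: \<phi>1 \<phi>2)
      next
        case 2 then show ?thesis using c2 k by (simp add: \<phi>1 \<phi>2 g1 eF2)
      next
        case 3
        have "((t-1,p),(Suc (t-1),p)) \<in> ?EB"
          by (rule eF2) (use c2 3 g2[of "t-1"] in auto)
        then show ?thesis using c2 3 by (simp add: \<phi>1 \<phi>2)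
      qed
    next
      case (c3 t)
      consider "t < k" | "k < t" using nk c3 by (metis linorder_neqE_nat)
      then show ?thesis
      proof cases
        case 1 then show ?thesis using c3 k eF3[of t N g] by (simp add: \<phi>1 \<phi>2 g1)
      next
        case 2
        have "((t-1, fst (g (t-1))),(t-1, Suc (fst (g (t-1))))) \<in> ?EB"
          by (rule eF3) (use c3 2 g2[of "t-1"] in auto)
        then show ?thesis using c3 2 g2[of "t-1"] by (simp add: \<phi>1 \<phi>2)
      qed
    next
      case (c4 t)
      consider "t < k" | "k < t" using nk c4 by (metis linorder_neqE_nat)
      then show ?thesis
      proof cases
        case 1 then show ?thesis using c4 k eF4[of t N g] by (simp add: \<phi>1 \<phi>2 g1)
      next
        case 2
        have "((Suc (t-1), fst (g (t-1))),(Suc (t-1), Suc (fst (g (t-1))))) \<in> ?EB"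
          by (rule eF4) (use c4 2 g2[of "t-1"] in auto)
        then show ?thesis using c4 2 g2[of "t-1"] by (simp add: \<phi>1 \<phi>2)
      qed
    qed
    moreover have "a \<in> ?A \<and> b \<in> ?A" using edgesF_in[OF ab] rng by blast
    ultimately show "a \<in> ?A \<and> b \<in> ?A \<and> (\<phi> a, \<phi> b) \<in> (?EB \<union> ?EB\<inverse>)\<^sup>*" by (auto intro: edge_R)
  next
    fix c d assume cd: "(c,d) \<in> ?EB"
    have "\<exists>a b. (a,b) \<in> ?EA \<and> \<phi> a = c \<and> \<phi> b = d"
      using cd
    proof (cases rule: edgesF_E)
      case (c1 p) then show ?thesis using k by (intro exI[of _ "(Suc N,p)"] exI[of _ "(0,p)"]) (simp add: \<phi>1 \<phi>2 eF1)
    next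
      case (c2 t p)
      show ?thesis
      proof (cases "t < k")
        case True then show ?thesis using c2 k
          by (intro exI[of _ "(t,p)"] exI[of _ "(Suc t,p)"]) (simp add: \<phi>1 \<phi>2 eF2 g1)
      next
        case False then show ?thesis using c2 k
          by (intro exI[of _ "(Suc t,p)"] exI[of _ "(Suc (Suc t),p)"]) (simp add: \<phi>1 \<phi>2 eF2 g2)
      qed
    next
      case (c3 t)
      show ?thesis
      proof (cases "t < k")
        case True then show ?thesis using c3 k eF3[of t "Suc N" f]
          by (intro exI[of _ "(t,fst (f t))"] exI[of _ "(t,Suc (fst (f t)))"]) (simp add: \<phi>1 \<phi>2 g1)
      next
        case False then show ?thesis using c3 k eF3[of "Suc t" "Suc N" f]
          by (intro exI[of _ "(Suc t,fst (f (Suc t)))"] exI[of _ "(Suc t,Suc (fst (f (Suc t))))"]) (simp add: \<phi>1 \<phi>2 g2)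
      qed
    next
      case (c4 t)
      show ?thesis
      proof (cases "t < k")
        case True then show ?thesis using c4 k eF4[of t "Suc N" f]
          by (intro exI[of _ "(Suc t,fst (f t))"] exI[of _ "(Suc t,Suc (fst (f t)))"]) (simp add: \<phi>1 \<phi>2 g1)
      next
        case False then show ?thesis using c4 k eF4[of "Suc t" "Suc N" f]
          by (intro exI[of _ "(Suc (Suc t),fst (f (Suc t)))"] exI[of _ "(Suc (Suc t),Suc (fst (f (Suc t))))"]) (simp add: \<phi>1 \<phi>2 g2)
      qed
    qed
    then obtain a b where "(a,b) \<in> ?EA" "\<phi> a = c" "\<phi> b = d" by blast
    moreover have "a \<in> ?A \<and> b \<in> ?A" using edgesF_in[OF calculation(1)] rng by blast
    ultimately show "\<exists>a\<in>?A. \<exists>b\<in>?A. \<phi> a = c \<and> \<phi> b = d \<and> (a,b) \<in> (?EA \<union> ?EA\<inverse>)\<^sup>*"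
      by (blast intro: edge_R)
  next
    fix a b assume a: "a \<in> ?A" and b: "b \<in> ?A" and e: "\<phi> a = \<phi> b"
    obtain t p where tp: "a = (t,p)" by fastforce
    obtain t' p' where tp': "b = (t',p')" by fastforce
    have pp: "p' = p" using e tp tp' by (auto simp: \<phi>_def split: if_splits)
    have 1: "((k,p),(Suc k,p)) \<in> ?EA" using a tp k nk by (intro eF2) auto
    have "t = t' \<or> (t = k \<and> t' = Suc k) \<or> (t' = k \<and> t = Suc k)"
      using e tp tp' by (auto simp: \<phi>_def split: if_splits)
    then show "(a,b) \<in> (?EA \<union> ?EA\<inverse>)\<^sup>*"
      using 1 tp tp' pp by (auto intro: edge_R edge_R')
  qed
  then show ?thesis unfolding LF_def g_def .
qed

lemma LF_kink:
  assumes k: "Suc k \<le> N" and sk: "snd (f k)" and sk1: "snd (f (Suc k))" and fk: "fst (f (Suc k)) = fst (f k)"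
    and rng: "\<forall>t<Suc N. 1 \<le> fst (f t) \<and> fst (f t) < n"
  shows "LF n (Suc N) f = Suc (LF n N (\<lambda>t. if t \<le> k then f t else f (Suc t)))"
proof -
  define i where "i = fst (f k)"
  define g where "g = (\<lambda>t. if t \<le> k then f t else f (Suc t))"
  define \<phi> :: "nat \<times> nat \<Rightarrow> nat \<times> nat" where "\<phi> = (\<lambda>(t,p). if t \<le> k then (t,p) else if t = Suc k then
      (if p = i \<or> p = Suc i then (0,0) else (Suc k,p)) else (t - 1, p))"
  have g1: "t \<le> k \<Longrightarrow> g t = f t" and g2: "k < t \<Longrightarrow> g t = f (Suc t)" for t by (auto simp: g_def)
  have \<phi>1: "t \<le> k \<Longrightarrow> \<phi> (t,p) = (t,p)" and \<phi>2: "Suc k < t \<Longrightarrow> \<phi> (t,p) = (t - 1,p)"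
    and \<phi>3: "p = i \<or> p = Suc i \<Longrightarrow> \<phi> (Suc k,p) = (0,0)"
    and \<phi>4: "p \<noteq> i \<Longrightarrow> p \<noteq> Suc i \<Longrightarrow> \<phi> (Suc k,p) = (Suc k,p)" for t p
    by (auto simp: \<phi>_def)
  have i1: "1 \<le> i" "i < n" using rng k by (auto simp: i_def)
  have rngg: "\<forall>t<N. 1 \<le> fst (g t) \<and> fst (g t) < n" using rng by (auto simp: g_def)
  let ?A = "{0..Suc N} \<times> {1..n}" and ?B = "{0..N} \<times> {1..n}"
  let ?EA = "edgesF n (Suc N) f" and ?EB = "edgesF n N g"
  have "card (?A // (?EA \<union> ?EA\<inverse>)\<^sup>*) = card (insert (0,0) ?B // (?EB \<union> ?EB\<inverse>)\<^sup>*)"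
  proof (rule card_quot_eq[where \<phi>=\<phi>])
    show "\<phi> ` ?A = insert (0,0) ?B"
    proof
      show "\<phi> ` ?A \<subseteq> insert (0,0) ?B" using k by (auto simp: \<phi>_def split: if_splits)
      show "insert (0,0) ?B \<subseteq> \<phi> ` ?A"
      proof
        fix x assume x: "x \<in> insert (0,0) ?B"
        show "x \<in> \<phi> ` ?A"
        proof (cases "x = (0,0)")
          case True
          then have "(Suc k,i) \<in> ?A" "\<phi> (Suc k,i) = x" using k i1 by (auto simp: \<phi>3)
          then show ?thesis by (metis rev_image_eqI)
        next
          case False
          then have x: "x \<in> ?B" using x by blast
          obtain t p where tp: "x = (t,p)" by fastforce
          show ?thesis
          proof (cases "t \<le> k")
            case True
            then have "(t,p) \<in> ?A" "\<phi> (t,p) = x" using x tp by (auto simp: \<phi>1)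
            then show ?thesis by (metis rev_image_eqI)
          next
            case False
            then have "(Suc t,p) \<in> ?A" "\<phi> (Suc t,p) = x" using x tp by (auto simp: \<phi>2)
            then show ?thesis by (metis rev_image_eqI)
          qed
        qed
      qed
    qed
  next
    fix a b assume ab: "(a,b) \<in> ?EA"
    have "\<phi> a = \<phi> b \<or> (\<phi> a, \<phi> b) \<in> ?EB"
      using ab
    proof (cases rule: edgesF_E)
      case (c1 p) then show ?thesis using k by (simp add: \<phi>1 \<phi>2 eF1)
    next
      case (c2 t p)
      consider "t < k" | "t = k" | "t = Suc k" | "Suc k < t" by linarith
      then show ?thesis
      proof cases
        case 1 then show ?thesis using c2 k by (simp add: \<phi>1 g1 eF2)
      next
        case 2 then have "p \<noteq> i" "p \<noteq> Suc i" using c2 sk by (auto simp: i_def)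
        then show ?thesis using c2 2 k eF2[of k N p n g] by (simp add: \<phi>1 \<phi>4 g1 i_def)
      next
        case 3 then have "p \<noteq> i" "p \<noteq> Suc i" using c2 sk1 fk by (auto simp: i_def)
        then show ?thesis using c2 3 by (simp add: \<phi>2 \<phi>4)
      next
        case 4
        have "((t-1,p),(Suc (t-1),p)) \<in> ?EB"
          by (rule eF2) (use c2 4 g2[of "t-1"] in auto)
        then show ?thesis using c2 4 by (simp add: \<phi>2)
      qed
    next
      case (c3 t)
      consider "t \<le> k" | "t = Suc k" | "Suc k < t" by linarith
      then show ?thesis
      proof cases
        case 1 then show ?thesis using c3 k eF3[of t N g] by (simp add: \<phi>1 g1)
      next
        case 2 then show ?thesis using c3 fk by (simp add: \<phi>3 i_def)
      next
        case 3
        have "((t-1, fst (g (t-1))),(t-1, Suc (fst (g (t-1))))) \<in> ?EB"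
          by (rule eF3) (use c3 3 g2[of "t-1"] in auto)
        then show ?thesis using c3 3 g2[of "t-1"] by (simp add: \<phi>2)
      qed
    next
      case (c4 t)
      consider "t < k" | "t = k" | "t = Suc k" | "Suc k < t" by linarith
      then show ?thesis
      proof cases
        case 1 then show ?thesis using c4 k eF4[of t N g] by (simp add: \<phi>1 g1)
      next
        case 2 then show ?thesis using c4 by (simp add: \<phi>3 i_def)
      next
        case 3 then show ?thesis using c4 fk k sk eF4[of k N g] by (simp add: \<phi>2 g1)
      next
        case 4
        have "((Suc (t-1), fst (g (t-1))),(Suc (t-1), Suc (fst (g (t-1))))) \<in> ?EB"
          by (rule eF4) (use c4 4 g2[of "t-1"] in auto)
        then show ?thesis using c4 4 g2[of "t-1"] by (simp add: \<phi>2)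
      qed
    qed
    moreover have "a \<in> ?A \<and> b \<in> ?A" using edgesF_in[OF ab] rng by blast
    ultimately show "a \<in> ?A \<and> b \<in> ?A \<and> (\<phi> a, \<phi> b) \<in> (?EB \<union> ?EB\<inverse>)\<^sup>*" by (auto intro: edge_R)
  next
    fix c d assume cd: "(c,d) \<in> ?EB"
    have "\<exists>a b. (a,b) \<in> ?EA \<and> \<phi> a = c \<and> \<phi> b = d"
      using cd
    proof (cases rule: edgesF_E)
      case (c1 p) then show ?thesis using k by (intro exI[of _ "(Suc N,p)"] exI[of _ "(0,p)"]) (simp add: \<phi>1 \<phi>2 eF1)
    next
      case (c2 t p)
      consider "t < k" | "t = k" | "k < t" by linarith
      then show ?thesis
      proof cases
        case 1 then show ?thesis using c2 k
          by (intro exI[of _ "(t,p)"] exI[of _ "(Suc t,p)"]) (simp add: \<phi>1 eF2 g1)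
      next
        case 2 then have "p \<noteq> i" "p \<noteq> Suc i" using c2 sk g1[of k] by (auto simp: i_def)
        then show ?thesis using c2 2 k g1[of k]
          by (intro exI[of _ "(k,p)"] exI[of _ "(Suc k,p)"]) (simp add: \<phi>1 \<phi>4 eF2)
      next
        case 3 then show ?thesis using c2 k
          by (intro exI[of _ "(Suc t,p)"] exI[of _ "(Suc (Suc t),p)"]) (simp add: \<phi>2 eF2 g2)
      qed
    next
      case (c3 t)
      show ?thesis
      proof (cases "t \<le> k")
        case True then show ?thesis using c3 k eF3[of t "Suc N" f]
          by (intro exI[of _ "(t,fst (f t))"] exI[of _ "(t,Suc (fst (f t)))"]) (simp add: \<phi>1 g1)
      next
        case False then show ?thesis using c3 k eF3[of "Suc t" "Suc N" f]
          by (intro exI[of _ "(Suc t,fst (f (Suc t)))"] exI[of _ "(Suc t,Suc (fst (f (Suc t))))"]) (simp add: \<phi>2 g2)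
      qed
    next
      case (c4 t)
      consider "t < k" | "t = k" | "k < t" by linarith
      then show ?thesis
      proof cases
        case 1 then show ?thesis using c4 k eF4[of t "Suc N" f]
          by (intro exI[of _ "(Suc t,fst (f t))"] exI[of _ "(Suc t,Suc (fst (f t)))"]) (simp add: \<phi>1 g1)
      next
        case 2 then show ?thesis using c4 k eF4[of "Suc k" "Suc N" f] sk1 fk g1[of k]
          by (intro exI[of _ "(Suc (Suc k),fst (f (Suc k)))"] exI[of _ "(Suc (Suc k),Suc (fst (f (Suc k))))"]) (simp add: \<phi>2)
      next
        case 3 then show ?thesis using c4 k eF4[of "Suc t" "Suc N" f]
          by (intro exI[of _ "(Suc (Suc t),fst (f (Suc t)))"] exI[of _ "(Suc (Suc t),Suc (fst (f (Suc t))))"]) (simp add: \<phi>2 g2)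
      qed
    qed
    then obtain a b where "(a,b) \<in> ?EA" "\<phi> a = c" "\<phi> b = d" by blast
    moreover have "a \<in> ?A \<and> b \<in> ?A" using edgesF_in[OF calculation(1)] rng by blast
    ultimately show "\<exists>a\<in>?A. \<exists>b\<in>?A. \<phi> a = c \<and> \<phi> b = d \<and> (a,b) \<in> (?EA \<union> ?EA\<inverse>)\<^sup>*"
      by (blast intro: edge_R)
  next
    fix a b assume a: "a \<in> ?A" and b: "b \<in> ?A" and e: "\<phi> a = \<phi> b"
    obtain t p where tp: "a = (t,p)" by fastforce
    obtain t' p' where tp': "b = (t',p')" by fastforce
    have p1: "1 \<le> p" "1 \<le> p'" using a b tp tp' by auto
    have cases: "a = b \<or> (t = Suc k \<and> t' = Suc (Suc k) \<and> p = p' \<and> p \<noteq> i \<and> p \<noteq> Suc i)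
      \<or> (t' = Suc k \<and> t = Suc (Suc k) \<and> p = p' \<and> p \<noteq> i \<and> p \<noteq> Suc i)
      \<or> (t = Suc k \<and> t' = Suc k \<and> (p = i \<or> p = Suc i) \<and> (p' = i \<or> p' = Suc i))"
      using e tp tp' p1 by (auto simp: \<phi>_def split: if_splits)
    have e1: "((Suc k,p),(Suc (Suc k),p)) \<in> ?EA" if "p \<noteq> i" "p \<noteq> Suc i" "1 \<le> p" "p \<le> n" for p
      using that k fk by (intro eF2) (auto simp: i_def)
    have e2: "((Suc k,i),(Suc k,Suc i)) \<in> ?EA" using eF3[of "Suc k" "Suc N" f] k sk1 fk by (simp add: i_def)
    have pn: "p \<le> n" using a tp by auto
    from cases show "(a,b) \<in> (?EA \<union> ?EA\<inverse>)\<^sup>*"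
    proof (elim disjE)
      assume "a = b" then show ?thesis by simp
    next
      assume "t = Suc k \<and> t' = Suc (Suc k) \<and> p = p' \<and> p \<noteq> i \<and> p \<noteq> Suc i"
      then show ?thesis using e1[of p] p1 pn tp tp' by (auto intro: edge_R)
    next
      assume "t' = Suc k \<and> t = Suc (Suc k) \<and> p = p' \<and> p \<noteq> i \<and> p \<noteq> Suc i"
      then show ?thesis using e1[of p] p1 pn tp tp' by (auto intro: edge_R')
    next
      assume h: "t = Suc k \<and> t' = Suc k \<and> (p = i \<or> p = Suc i) \<and> (p' = i \<or> p' = Suc i)"
      then show ?thesis using e2 tp tp' by (auto intro: edge_R edge_R')
    qed
  qed
  also have "\<dots> = Suc (card (?B // (?EB \<union> ?EB\<inverse>)\<^sup>*))"
  proof (rule card_quot_insert)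
    show "finite ?B" by simp
    show "(0,0) \<notin> ?B" by simp
    fix c d assume "(c,d) \<in> ?EB"
    then show "c \<noteq> (0,0) \<and> d \<noteq> (0,0)" using edgesF_in[of c d n N g] rngg by auto
  qed
  finally show ?thesis unfolding LF_def g_def .
qed

lemma LF_pos: "1 \<le> n \<Longrightarrow> 1 \<le> LF n N f"
proof -
  assume n: "1 \<le> n"
  let ?R = "(edgesF n N f \<union> (edgesF n N f)\<inverse>)\<^sup>*"
  have "?R``{(0,1)} \<in> ({0..N} \<times> {1..n}) // ?R" using n by (intro quotientI) auto
  moreover have "finite (({0..N} \<times> {1..n}) // ?R)" unfolding quotient_def by simp
  ultimately show ?thesis unfolding LF_def by (metis One_nat_def Suc_leI card_gt_0_iff empty_iff)
qed



definition XP :: "int \<Rightarrow> int fls" where "XP k = fls_X_intpow k"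

lemma XP_mult: "XP a * XP b = XP (a + b)"
  unfolding XP_def by (rule fls_X_intpow_times_fls_X_intpow)
lemma XP_mult_assoc: "XP a * (XP b * z) = XP (a + b) * z"
  by (simp add: mult.assoc[symmetric] XP_mult)
lemma XP_0: "XP 0 = 1" unfolding XP_def by simp
lemma fls_X_XP: "fls_X = XP 1" unfolding XP_def by (simp add: fls_X_conv_shift_1)
lemma fls_X_inv_XP: "fls_X_inv = XP (-1)" unfolding XP_def by (simp add: fls_X_inv_conv_shift_1)
lemma XP_nth: "fls_nth (XP a * f) d = fls_nth f (d - a)"
  unfolding XP_def by (simp add: fls_X_intpow_times_conv_shift)

definition DD :: "int fls" where "DD = - XP 1 - XP (-1)"

definition aexpL :: "braid_word \<Rightarrow> bool list \<Rightarrow> int" where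
  "aexpL w bs = sum_list (map2 (\<lambda>l c. (if c then 1 else -1) * (if snd l then 1 else -1)) w bs)"

definition toks :: "braid_word \<Rightarrow> bool list \<Rightarrow> nat \<Rightarrow> nat \<times> bool" where
  "toks w bs = (\<lambda>t. (fst (w!t), bs!t))"

definition JJ :: "nat \<Rightarrow> braid_word \<Rightarrow> int fls" where
  "JJ n w = (\<Sum>bs\<in>{bs. length bs = length w}.
      XP ((aexpL w bs - 3 * writhe w) div 2) * DD ^ (LF n (length w) (toks w bs) - 1))"

lemma writhe_list: "writhe w = sum_list (map (\<lambda>l. if snd l then -1 else 1) w)"
  unfolding writhe_def by (simp add: sum_list_sum_nth atLeast0LessThan)

lemma writhe_append: "writhe (u @ v) = writhe u + writhe v"
  by (simp add: writhe_list)
lemma writhe_Cons: "writhe (l # v) = (if snd l then -1 else 1) + writhe v"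
  by (simp add: writhe_list)

lemma aexpL_append: "length x = length u \<Longrightarrow> aexpL (u @ v) (x @ y) = aexpL u x + aexpL v y"
  by (simp add: aexpL_def)
lemma aexpL_Cons: "aexpL (l # v) (c # y) = (if c then 1 else -1) * (if snd l then 1 else -1) + aexpL v y"
  by (simp add: aexpL_def)

lemma edgesF_cong: "(\<And>t. t < N \<Longrightarrow> f t = f' t) \<Longrightarrow> edgesF n N f = edgesF n N f'"
  unfolding edgesF_def by (auto 0 4)

lemma LF_cong: "(\<And>t. t < N \<Longrightarrow> f t = f' t) \<Longrightarrow> LF n N f = LF n N f'"
  unfolding LF_def using edgesF_cong by metis

lemma t1: "length bs = N \<Longrightarrow> map (\<lambda>t. t \<in> {t. t < N \<and> bs ! t}) [0..<N] = bs"
  by (rule nth_equalityI) auto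
lemma t3: "S \<in> Pow {..<N} \<Longrightarrow> {t. t < N \<and> map (\<lambda>t. t \<in> S) [0..<N] ! t} = S" by auto
lemma t5: "length bs = length w \<Longrightarrow> state_A_exp w {t. t < length w \<and> bs ! t} = aexpL w bs"
  unfolding state_A_exp_def aexpL_def by (simp add: sum_list_sum_nth atLeast0LessThan)
lemma t6: "state_loops n w {t. t < length w \<and> bs ! t} = LF n (length w) (toks w bs)"
      unfolding state_loops_LF toks_def by (rule LF_cong) simp

lemma jones_JJ: "jones n w = (-1) ^ nat \<bar>writhe w\<bar> * JJ n w"
proof -
  let ?N = "length w"
  have "(\<Sum>bs\<in>{bs. length bs = ?N}.
      XP ((aexpL w bs - 3 * writhe w) div 2) * DD ^ (LF n ?N (toks w bs) - 1))
     = (\<Sum>S\<in>Pow {..<?N}. XP ((state_A_exp w S - 3 * writhe w) div 2)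
            * (- fls_X - fls_X_inv) ^ (state_loops n w S - 1))"
  proof (rule sum.reindex_bij_witness[where i = "\<lambda>S. map (\<lambda>t. t \<in> S) [0..<?N]" and j = "\<lambda>bs::bool list. {t. t < ?N \<and> bs ! t}"])
    fix bs :: "bool list" assume "bs \<in> {bs. length bs = ?N}"
    then show "map (\<lambda>t. t \<in> {t. t < ?N \<and> bs ! t}) [0..<?N] = bs" using t1[of bs ?N] by simp
  next
    fix bs :: "bool list" assume "bs \<in> {bs. length bs = ?N}"
    then show "{t. t < ?N \<and> bs ! t} \<in> Pow {..<?N}" by auto
  next
    fix S assume "S \<in> Pow {..<?N}"
    then show "{t. t < ?N \<and> map (\<lambda>t. t \<in> S) [0..<?N] ! t} = S" by (rule t3)
  next
    fix S assume "S \<in> Pow {..<?N}"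
    then show "map (\<lambda>t. t \<in> S) [0..<?N] \<in> {bs. length bs = ?N}" by simp
  next
    fix bs :: "bool list" assume bs: "bs \<in> {bs. length bs = ?N}"
    then show "XP ((state_A_exp w {t. t < ?N \<and> bs ! t} - 3 * writhe w) div 2) * (- fls_X - fls_X_inv) ^ (state_loops n w {t. t < ?N \<and> bs ! t} - 1)
        = XP ((aexpL w bs - 3 * writhe w) div 2) * DD ^ (LF n ?N (toks w bs) - 1)"
      by (simp only: t5 t6 DD_def fls_X_XP fls_X_inv_XP mem_Collect_eq)
  qed
  moreover have "jones n w = (-1) ^ nat \<bar>writhe w\<bar> * (\<Sum>S\<in>Pow {..<?N}. XP ((state_A_exp w S - 3 * writhe w) div 2)
            * (- fls_X - fls_X_inv) ^ (state_loops n w S - 1))"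
    unfolding jones_def XP_def sum_distrib_left mult.assoc ..
  ultimately show ?thesis unfolding JJ_def by simp
qed

lemma s1:
  fixes F :: "bool list \<Rightarrow> 'b::comm_monoid_add"
  shows "(\<Sum>bs\<in>{bs. length bs = a + Suc b}. F bs)
     = (\<Sum>(x,c,y)\<in>{x. length x = a} \<times> (UNIV \<times> {y. length y = b}). F (x @ [c] @ y))"
proof -
  have tk: "take a bs @ bs ! a # drop (Suc a) bs = bs" if "length bs = a + Suc b" for bs :: "bool list"
    using that by (simp add: Cons_nth_drop_Suc)
  show ?thesis
  proof (rule sum.reindex_bij_witness[where i = "\<lambda>(x,c,y). x @ [c] @ y" and j = "\<lambda>bs. (take a bs, bs ! a, drop (Suc a) bs)"])
    fix bs :: "bool list" assume "bs \<in> {bs. length bs = a + Suc b}"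
    then show "(case (take a bs, bs ! a, drop (Suc a) bs) of (x, c, y) \<Rightarrow> x @ [c] @ y) = bs"
      using tk by simp
  next
    fix bs :: "bool list" assume "bs \<in> {bs. length bs = a + Suc b}"
    then show "(take a bs, bs ! a, drop (Suc a) bs) \<in> {x. length x = a} \<times> (UNIV \<times> {y. length y = b})"
      by simp
  next
    fix p :: "bool list \<times> bool \<times> bool list" assume "p \<in> {x. length x = a} \<times> (UNIV \<times> {y. length y = b})"
    then show "(\<lambda>bs. (take a bs, bs ! a, drop (Suc a) bs)) ((\<lambda>(x,c,y). x @ [c] @ y) p) = p"
      by (cases p) (auto simp: nth_append)
  next
    fix p :: "bool list \<times> bool \<times> bool list" assume "p \<in> {x. length x = a} \<times> (UNIV \<times> {y. length y = b})"
    then show "(\<lambda>(x,c,y). x @ [c] @ y) p \<in> {bs. length bs = a + Suc b}"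
      by (cases p) auto
  next
    fix bs :: "bool list" assume "bs \<in> {bs. length bs = a + Suc b}"
    then show "(case (take a bs, bs ! a, drop (Suc a) bs) of (x, c, y) \<Rightarrow> F (x @ [c] @ y)) = F bs"
      using tk by simp
  qed
qed
lemma s2:
  fixes G :: "bool list \<Rightarrow> bool \<Rightarrow> bool list \<Rightarrow> 'b::comm_monoid_add"
  shows "(\<Sum>(x,c,y)\<in>X \<times> (UNIV \<times> Y). G x c y) = (\<Sum>x\<in>X. \<Sum>c\<in>UNIV. \<Sum>y\<in>Y. G x c y)"
  by (simp only: sum.cartesian_product split_def)
lemma s3:
  fixes G :: "bool \<Rightarrow> 'b::comm_monoid_add"
  shows "(\<Sum>c\<in>UNIV. G c) = G False + G True"
  by (simp add: UNIV_bool add.commute)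
lemma s4:
  fixes F :: "bool list \<Rightarrow> 'b::comm_monoid_add"
  shows "(\<Sum>bs\<in>{bs. length bs = a + b}. F bs) = (\<Sum>(x,y)\<in>{x. length x = a} \<times> {y. length y = b}. F (x @ y))"
    by (rule sum.reindex_bij_witness[where i = "\<lambda>(x,y). x @ y" and j = "\<lambda>bs. (take a bs, drop a bs)"]) auto

lemma sum_split3:
  fixes F :: "bool list \<Rightarrow> 'b::comm_monoid_add"
  shows "(\<Sum>bs\<in>{bs. length bs = a + Suc b}. F bs)
   = (\<Sum>x\<in>{x. length x = a}. \<Sum>y\<in>{y. length y = b}. F (x @ [False] @ y) + F (x @ [True] @ y))"
  unfolding s1 s2 s3 sum.distrib ..

lemma sum_split2:
  fixes F :: "bool list \<Rightarrow> 'b::comm_monoid_add"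
  shows "(\<Sum>bs\<in>{bs. length bs = a + b}. F bs) = (\<Sum>x\<in>{x. length x = a}. \<Sum>y\<in>{y. length y = b}. F (x @ y))"
  unfolding s4 by (simp only: sum.cartesian_product split_def)



definition EE :: "nat \<Rightarrow> braid_word \<Rightarrow> nat \<Rightarrow> braid_word \<Rightarrow> int fls" where
  "EE n u i v = (\<Sum>x\<in>{x. length x = length u}. \<Sum>y\<in>{y. length y = length v}.
     XP ((aexpL (u@v) (x@y) - 3 * writhe (u@v)) div 2)
     * DD ^ (LF n (Suc (length u + length v)) (toks (u @ [(i,True)] @ v) (x @ [True] @ y)) - 1))"

lemma toks_app: "length x = length u \<Longrightarrow>
   toks (u @ v) (x @ y) t = (if t < length u then toks u x t else toks v y (t - length u))"
  by (simp add: toks_def nth_append)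
lemma toks_Cons: "toks (l # v) (c # y) t = (if t = 0 then (fst l, c) else toks v y (t - 1))"
  by (simp add: toks_def nth_Cons')

lemma div2_shift: "((z::int) + 2 * s) div 2 = z div 2 + s"
  by simp
lemma div2_shift4: "((z::int) + 4 * s) div 2 = z div 2 + 2 * s"
  by simp

lemma expand:
  assumes rng: "\<forall>l\<in>set (u @ v). 1 \<le> fst l \<and> fst l < n" and i: "1 \<le> i" "i < n"
  shows "JJ n (u @ [(i,b)] @ v) = XP (if b then 1 else -1) * JJ n (u @ v)
           + XP (2 * (if b then 1 else -1)) * EE n u i v"
proof -
  define sb :: int where "sb = (if b then 1 else -1)"
  let ?w = "u @ [(i,b)] @ v"
  let ?T = "\<lambda>w bs. XP ((aexpL w bs - 3 * writhe w) div 2) * DD ^ (LF n (length w) (toks w bs) - 1)"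
  let ?Et = "\<lambda>x y. XP ((aexpL (u@v) (x@y) - 3 * writhe (u@v)) div 2)
     * DD ^ (LF n (Suc (length u + length v)) (toks (u @ [(i,True)] @ v) (x @ [True] @ y)) - 1)"
  have rw: "\<forall>t<Suc (length u + length v). 1 \<le> fst (toks ?w bs t) \<and> fst (toks ?w bs t) < n" for bs
  proof (intro allI impI)
    fix t assume "t < Suc (length u + length v)"
    then have "?w ! t \<in> set ?w" by (intro nth_mem) simp
    then show "1 \<le> fst (toks ?w bs t) \<and> fst (toks ?w bs t) < n" using rng i by (auto simp: toks_def)
  qed
  have wr: "writhe ?w = writhe u - sb + writhe v" "writhe (u @ v) = writhe u + writhe v"
    by (simp_all add: writhe_append writhe_Cons sb_def)
  have cF: "?T ?w (x @ [False] @ y) = XP sb * ?T (u @ v) (x @ y)"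
    if x: "length x = length u" and y: "length y = length v" for x y
  proof -
    have a: "aexpL ?w (x @ [False] @ y) - 3 * writhe ?w = (aexpL (u@v) (x@y) - 3 * writhe (u@v)) + 2 * sb"
      using x by (simp add: aexpL_append aexpL_Cons writhe_append writhe_Cons sb_def)
    have l: "LF n (length ?w) (toks ?w (x @ [False] @ y)) = LF n (length (u@v)) (toks (u@v) (x@y))"
    proof -
      have "LF n (length ?w) (toks ?w (x @ [False] @ y)) = LF n (Suc (length u + length v)) (toks ?w (x @ [False] @ y))"
        by simp
      also have "\<dots> = LF n (length u + length v) (\<lambda>t. if t < length u then toks ?w (x @ [False] @ y) t
                   else toks ?w (x @ [False] @ y) (Suc t))"
        by (rule LF_del) (use x rw in \<open>auto simp: toks_def nth_append\<close>)
      also have "\<dots> = LF n (length u + length v) (toks (u@v) (x@y))"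
        by (rule LF_cong) (use x in \<open>auto simp: toks_app toks_Cons\<close>)
      finally show ?thesis by simp
    qed
    show ?thesis unfolding a l div2_shift by (simp add: XP_mult[symmetric] mult.assoc)
  qed
  have cT: "?T ?w (x @ [True] @ y) = XP (2 * sb) * ?Et x y"
    if x: "length x = length u" and y: "length y = length v" for x y
  proof -
    have a: "aexpL ?w (x @ [True] @ y) - 3 * writhe ?w = (aexpL (u@v) (x@y) - 3 * writhe (u@v)) + 4 * sb"
      using x by (simp add: aexpL_append aexpL_Cons writhe_append writhe_Cons sb_def)
    have tk: "toks ?w (x @ [True] @ y) = toks (u @ [(i,True)] @ v) (x @ [True] @ y)"
      by (rule ext) (use x in \<open>simp add: toks_app toks_Cons\<close>)
    show ?thesis unfolding a tk div2_shift4 by (simp add: XP_mult[symmetric] mult.assoc)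
  qed
  have "JJ n ?w = (\<Sum>bs\<in>{bs. length bs = length u + Suc (length v)}. ?T ?w bs)"
    unfolding JJ_def by simp
  also have "\<dots> = (\<Sum>x\<in>{x. length x = length u}. \<Sum>y\<in>{y. length y = length v}.
       ?T ?w (x @ [False] @ y) + ?T ?w (x @ [True] @ y))"
    by (rule sum_split3)
  also have "\<dots> = (\<Sum>x\<in>{x. length x = length u}. \<Sum>y\<in>{y. length y = length v}.
       XP sb * ?T (u @ v) (x @ y) + XP (2 * sb) * ?Et x y)"
    by (intro sum.cong refl) (simp only: mem_Collect_eq cF cT)
  also have "\<dots> = XP sb * (\<Sum>x\<in>{x. length x = length u}. \<Sum>y\<in>{y. length y = length v}. ?T (u @ v) (x @ y))
       + XP (2 * sb) * EE n u i v"
    unfolding EE_def by (simp add: sum.distrib sum_distrib_left)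
  also have "(\<Sum>x\<in>{x. length x = length u}. \<Sum>y\<in>{y. length y = length v}. ?T (u @ v) (x @ y)) = JJ n (u @ v)"
    unfolding JJ_def using sum_split2[of "?T (u @ v)" "length u" "length v"] by simp
  finally show ?thesis unfolding sb_def .
qed

lemma sum_split1:
  fixes F :: "bool list \<Rightarrow> 'b::comm_monoid_add"
  shows "(\<Sum>bs\<in>{bs. length bs = Suc a}. F bs) = (\<Sum>x\<in>{x. length x = a}. F (x @ [False]) + F (x @ [True]))"
proof -
  have e: "{y::bool list. length y = 0} = {[]}" by auto
  show ?thesis using sum_split3[of F a 0] by (simp add: e)
qed

lemma DD_kink: "XP s + XP (2 * s) * DD = - XP (3 * s)" if "s = 1 \<or> s = -1"
  using that by (auto simp: DD_def algebra_simps XP_mult)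

lemma kink:
  assumes rng: "\<forall>l\<in>set (u @ v). 1 \<le> fst l \<and> fst l < n" and i: "1 \<le> i" "i < n"
  shows "EE n (u @ [(i,b)]) i v = - XP (3 * (if b then 1 else -1)) * EE n u i v"
proof -
  define sb :: int where "sb = (if b then 1 else -1)"
  let ?Et = "\<lambda>x y. XP ((aexpL (u@v) (x@y) - 3 * writhe (u@v)) div 2)
     * DD ^ (LF n (Suc (length u + length v)) (toks (u @ [(i,True)] @ v) (x @ [True] @ y)) - 1)"
  let ?w = "u @ [(i,b)] @ [(i,True)] @ v"
  let ?G = "\<lambda>x y. XP ((aexpL ((u @ [(i,b)]) @ v) (x @ y) - 3 * writhe ((u @ [(i,b)]) @ v)) div 2)
     * DD ^ (LF n (Suc (length (u @ [(i,b)]) + length v)) (toks ((u @ [(i,b)]) @ [(i,True)] @ v) (x @ [True] @ y)) - 1)"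
  have rw: "\<forall>t<Suc (Suc (length u + length v)). 1 \<le> fst (toks ?w bs t) \<and> fst (toks ?w bs t) < n" for bs
  proof (intro allI impI)
    fix t assume "t < Suc (Suc (length u + length v))"
    then have "?w ! t \<in> set ?w" by (intro nth_mem) simp
    then show "1 \<le> fst (toks ?w bs t) \<and> fst (toks ?w bs t) < n" using rng i by (auto simp: toks_def)
  qed
  have LFpos: "1 \<le> LF n N f" for N f using LF_pos[of n N f] i by simp
  have cF: "?G (x @ [False]) y = XP sb * ?Et x y"
    if x: "length x = length u" and y: "length y = length v" for x y
  proof -
    have a: "aexpL ((u @ [(i,b)]) @ v) ((x @ [False]) @ y) - 3 * writhe ((u @ [(i,b)]) @ v)
         = (aexpL (u@v) (x@y) - 3 * writhe (u@v)) + 2 * sb"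
      using x by (simp add: aexpL_append aexpL_Cons writhe_append writhe_Cons sb_def)
    have l: "LF n (Suc (length (u @ [(i,b)]) + length v)) (toks ((u @ [(i,b)]) @ [(i,True)] @ v) ((x @ [False]) @ [True] @ y))
        = LF n (Suc (length u + length v)) (toks (u @ [(i,True)] @ v) (x @ [True] @ y))"
    proof -
      have "LF n (Suc (length (u @ [(i,b)]) + length v)) (toks ((u @ [(i,b)]) @ [(i,True)] @ v) ((x @ [False]) @ [True] @ y))
          = LF n (Suc (Suc (length u + length v))) (toks ?w (x @ [False] @ [True] @ y))"
        by simp
      also have "\<dots> = LF n (Suc (length u + length v)) (\<lambda>t. if t < length u then toks ?w (x @ [False] @ [True] @ y) t
                   else toks ?w (x @ [False] @ [True] @ y) (Suc t))"
        by (rule LF_del) (use x rw in \<open>auto simp: toks_def nth_append\<close>)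
      also have "\<dots> = LF n (Suc (length u + length v)) (toks (u @ [(i,True)] @ v) (x @ [True] @ y))"
        by (rule LF_cong) (use x in \<open>auto simp: toks_app toks_Cons\<close>)
      finally show ?thesis .
    qed
    show ?thesis unfolding a l div2_shift by (simp add: XP_mult[symmetric] mult.assoc)
  qed
  have cT: "?G (x @ [True]) y = XP (2 * sb) * DD * ?Et x y"
    if x: "length x = length u" and y: "length y = length v" for x y
  proof -
    have a: "aexpL ((u @ [(i,b)]) @ v) ((x @ [True]) @ y) - 3 * writhe ((u @ [(i,b)]) @ v)
         = (aexpL (u@v) (x@y) - 3 * writhe (u@v)) + 4 * sb"
      using x by (simp add: aexpL_append aexpL_Cons writhe_append writhe_Cons sb_def)
    define L where "L = LF n (Suc (length u + length v)) (toks (u @ [(i,True)] @ v) (x @ [True] @ y))"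
    have l: "LF n (Suc (length (u @ [(i,b)]) + length v)) (toks ((u @ [(i,b)]) @ [(i,True)] @ v) ((x @ [True]) @ [True] @ y))
        = Suc L"
    proof -
      have "LF n (Suc (length (u @ [(i,b)]) + length v)) (toks ((u @ [(i,b)]) @ [(i,True)] @ v) ((x @ [True]) @ [True] @ y))
          = LF n (Suc (Suc (length u + length v))) (toks ?w (x @ [True] @ [True] @ y))"
        by simp
      also have "\<dots> = Suc (LF n (Suc (length u + length v)) (\<lambda>t. if t \<le> length u then toks ?w (x @ [True] @ [True] @ y) t
                   else toks ?w (x @ [True] @ [True] @ y) (Suc t)))"
        by (rule LF_kink) (use x rw in \<open>auto simp: toks_def nth_append\<close>)
      also have "LF n (Suc (length u + length v)) (\<lambda>t. if t \<le> length u then toks ?w (x @ [True] @ [True] @ y) t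
                   else toks ?w (x @ [True] @ [True] @ y) (Suc t)) = L"
        unfolding L_def by (rule LF_cong) (use x in \<open>auto simp: toks_app toks_Cons\<close>)
      finally show ?thesis .
    qed
    have "DD ^ (Suc L - 1) = DD * DD ^ (L - 1)"
      using LFpos[of "Suc (length u + length v)" "toks (u @ [(i,True)] @ v) (x @ [True] @ y)"]
      unfolding L_def[symmetric] by (cases L) auto
    then show ?thesis unfolding a l div2_shift4 L_def[symmetric] by (simp add: XP_mult[symmetric] mult.assoc)
  qed
  have "EE n (u @ [(i,b)]) i v = (\<Sum>x'\<in>{x. length x = Suc (length u)}. \<Sum>y\<in>{y. length y = length v}. ?G x' y)"
    unfolding EE_def by simp
  also have "\<dots> = (\<Sum>x\<in>{x. length x = length u}. (\<Sum>y\<in>{y. length y = length v}. ?G (x @ [False]) y)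
                     + (\<Sum>y\<in>{y. length y = length v}. ?G (x @ [True]) y))"
    by (rule sum_split1)
  also have "\<dots> = (\<Sum>x\<in>{x. length x = length u}. \<Sum>y\<in>{y. length y = length v}. (XP sb + XP (2 * sb) * DD) * ?Et x y)"
    unfolding sum.distrib[symmetric]
    by (intro sum.cong refl) (simp only: mem_Collect_eq cF cT distrib_right)
  also have "\<dots> = (XP sb + XP (2 * sb) * DD) * EE n u i v"
    unfolding EE_def by (simp add: sum_distrib_left)
  also have "XP sb + XP (2 * sb) * DD = - XP (3 * sb)"
    by (rule DD_kink) (simp add: sb_def)
  finally show ?thesis unfolding sb_def .
qed



lemma gp_pos: "0 \<le> e \<Longrightarrow> gen_power i (e + 1) = gen_power i e @ [(i,True)]"
proof -
  assume e: "0 \<le> e"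
  then have "nat (e + 1) = Suc (nat e)" by simp
  then show ?thesis using e by (simp add: gen_power_def replicate_append_same)
qed

lemma gp_neg: "e < 0 \<Longrightarrow> gen_power i e = gen_power i (e + 1) @ [(i,False)]"
proof -
  assume e: "e < 0"
  have a: "gen_power i (e + 1) = replicate (nat (- (e + 1))) (i,False)"
    using e by (cases "e + 1 = 0") (auto simp: gen_power_def)
  have "nat (- e) = Suc (nat (- (e + 1)))" using e by simp
  then show ?thesis using e a by (simp add: gen_power_def replicate_append_same)
qed

lemma set_gp: "l \<in> set (gen_power i e) \<Longrightarrow> fst l = i"
  by (auto simp: gen_power_def split: if_splits)

lemma writhe_gp: "writhe (gen_power i e) = - e"
  by (simp add: writhe_list gen_power_def sum_list_replicate)

lemma JJ_rec:
  assumes rng: "\<forall>l\<in>set (P @ Q). 1 \<le> fst l \<and> fst l < n" and i: "1 \<le> i" "i < n"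
  shows "JJ n (P @ gen_power i (e + 2) @ Q)
     = (XP 1 - XP 3) * JJ n (P @ gen_power i (e + 1) @ Q) + XP 4 * JJ n (P @ gen_power i e @ Q)"
proof -
  have r: "\<forall>l\<in>set (P @ gen_power i f @ ws @ Q). 1 \<le> fst l \<and> fst l < n"
    if "\<forall>l\<in>set ws. fst l = i" for f ws
    using rng i that by (auto dest: set_gp)
  have x1: "XP 1 * XP 3 = XP 4" "XP 2 * XP 3 = XP 5" "XP 1 * XP (-1) = 1" "XP 4 * XP (-1) = XP 3"
     "XP 4 * XP (-2) = XP 2" "XP 3 * XP (-1) = XP 2" "XP 4 * XP (-5) = XP (-1)" "XP 1 * XP (-2) = XP (-1)"
     "XP (-2) * XP (-3) = XP (-5)"
    by (simp_all add: XP_mult XP_0)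
  have ee: "e + 1 + 1 = e + 2" by simp
  consider "0 \<le> e" | "e \<le> -2" | "e = -1" by linarith
  then show ?thesis
  proof cases
    case 1
    have g1: "gen_power i (e + 1) = gen_power i e @ [(i,True)]" using 1 by (rule gp_pos)
    have g2: "gen_power i (e + 2) = gen_power i e @ [(i,True)] @ [(i,True)]"
      using gp_pos[of "e+1" i, unfolded ee] 1 g1 by simp
    have h1: "JJ n (P @ gen_power i (e + 2) @ Q) = XP 1 * JJ n (P @ gen_power i (e + 1) @ Q)
        + XP 2 * EE n (P @ gen_power i e @ [(i,True)]) i Q"
      using expand[of "P @ gen_power i e @ [(i,True)]" Q n i True] r[of "[(i,True)]" e] i
      unfolding g1 g2 by simp
    have h2: "EE n (P @ gen_power i e @ [(i,True)]) i Q = - XP 3 * EE n (P @ gen_power i e) i Q"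
      using kink[of "P @ gen_power i e" Q n i True] r[of "[]" e] i by simp
    have h3: "JJ n (P @ gen_power i (e + 1) @ Q) = XP 1 * JJ n (P @ gen_power i e @ Q)
        + XP 2 * EE n (P @ gen_power i e) i Q"
      using expand[of "P @ gen_power i e" Q n i True] r[of "[]" e] i unfolding g1 by simp
    have k1: "XP 3 * JJ n (P @ gen_power i (e + 1) @ Q) = XP 4 * JJ n (P @ gen_power i e @ Q)
        + XP 5 * EE n (P @ gen_power i e) i Q"
      unfolding h3 by (simp add: distrib_left mult.assoc[symmetric] XP_mult)
    have k2: "XP 2 * EE n (P @ gen_power i e @ [(i,True)]) i Q = - (XP 5 * EE n (P @ gen_power i e) i Q)"
      unfolding h2 by (simp add: mult.assoc[symmetric] XP_mult)
    show ?thesis unfolding h1 left_diff_distrib k1 k2 by (simp add: algebra_simps)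
  next
    case 2
    have g1: "gen_power i (e + 1) = gen_power i (e + 2) @ [(i,False)]" using gp_neg[of "e+1" i, unfolded ee] 2 by simp
    have g0: "gen_power i e = gen_power i (e + 2) @ [(i,False)] @ [(i,False)]"
      using gp_neg[of e i] 2 g1 by simp
    have h1: "JJ n (P @ gen_power i e @ Q) = XP (-1) * JJ n (P @ gen_power i (e + 1) @ Q)
        + XP (-2) * EE n (P @ gen_power i (e + 2) @ [(i,False)]) i Q"
      using expand[of "P @ gen_power i (e + 2) @ [(i,False)]" Q n i False] r[of "[(i,False)]" "e+2"] i
      unfolding g1 g0 by simp
    have h2: "EE n (P @ gen_power i (e + 2) @ [(i,False)]) i Q = - XP (-3) * EE n (P @ gen_power i (e + 2)) i Q"
      using kink[of "P @ gen_power i (e + 2)" Q n i False] r[of "[]" "e+2"] i by simp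
    have h3: "JJ n (P @ gen_power i (e + 1) @ Q) = XP (-1) * JJ n (P @ gen_power i (e + 2) @ Q)
        + XP (-2) * EE n (P @ gen_power i (e + 2)) i Q"
      using expand[of "P @ gen_power i (e + 2)" Q n i False] r[of "[]" "e+2"] i unfolding g1 by simp
    have k1: "XP 1 * JJ n (P @ gen_power i (e + 1) @ Q) = JJ n (P @ gen_power i (e + 2) @ Q)
        + XP (-1) * EE n (P @ gen_power i (e + 2)) i Q"
      unfolding h3 by (simp add: distrib_left mult.assoc[symmetric] XP_mult XP_0)
    have k2: "XP 4 * JJ n (P @ gen_power i e @ Q) = XP 3 * JJ n (P @ gen_power i (e + 1) @ Q)
        - XP (-1) * EE n (P @ gen_power i (e + 2)) i Q"
      unfolding h1 h2 by (simp add: distrib_left right_diff_distrib mult.assoc[symmetric] XP_mult)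
    show ?thesis unfolding left_diff_distrib k1 k2 by (simp add: algebra_simps)
  next
    case 3
    have g: "gen_power i (e + 2) = [(i,True)]" "gen_power i (e + 1) = []" "gen_power i e = [(i,False)]"
      using 3 by (simp_all add: gen_power_def)
    have h1: "JJ n (P @ [(i,True)] @ Q) = XP 1 * JJ n (P @ Q) + XP 2 * EE n P i Q"
      using expand[of P Q n i True] rng i by simp
    have h2: "JJ n (P @ [(i,False)] @ Q) = XP (-1) * JJ n (P @ Q) + XP (-2) * EE n P i Q"
      using expand[of P Q n i False] rng i by simp
    have k: "XP 4 * JJ n (P @ [(i,False)] @ Q) = XP 3 * JJ n (P @ Q) + XP 2 * EE n P i Q"
      unfolding h2 by (simp add: distrib_left mult.assoc[symmetric] XP_mult)
    show ?thesis unfolding g append_Nil left_diff_distrib k h1 by (simp add: algebra_simps)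
  qed
qed



lemma sgn_step: "(-1::'a::ring_1) ^ nat \<bar>z - 1\<bar> = - ((-1) ^ nat \<bar>z\<bar>)"
proof (cases "1 \<le> z")
  case True
  then have h: "nat \<bar>z\<bar> = Suc (nat \<bar>z - 1\<bar>)" by simp
  have "(-1::'a) ^ nat \<bar>z\<bar> = - ((-1) ^ nat \<bar>z - 1\<bar>)" by (simp only: h power_Suc) simp
  then show ?thesis by simp
next
  case False
  then have h: "nat \<bar>z - 1\<bar> = Suc (nat \<bar>z\<bar>)" by simp
  show ?thesis by (simp only: h power_Suc) simp
qed

lemma jones_rec:
  assumes rng: "\<forall>l\<in>set (P @ Q). 1 \<le> fst l \<and> fst l < n" and i: "1 \<le> i" "i < n"
  shows "jones n (P @ gen_power i (e + 2) @ Q)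
     = XP 4 * jones n (P @ gen_power i e @ Q) + (XP 3 - XP 1) * jones n (P @ gen_power i (e + 1) @ Q)"
proof -
  define c where "c = writhe P + writhe Q"
  have w: "writhe (P @ gen_power i f @ Q) = c - f" for f
    by (simp add: writhe_append writhe_gp c_def)
  define s0 :: "int fls" where "s0 = (-1) ^ nat \<bar>c - e\<bar>"
  have s1: "(-1::int fls) ^ nat \<bar>c - (e + 1)\<bar> = - s0"
    using sgn_step[of "c - e"] unfolding s0_def by (simp add: algebra_simps)
  have s2: "(-1::int fls) ^ nat \<bar>c - (e + 2)\<bar> = s0"
  proof -
    have h: "c - (e + 1) - 1 = c - (e + 2)" by simp
    show ?thesis using sgn_step[of "c - (e + 1)", where 'a = "int fls", unfolded h s1] by simp
  qed
  show ?thesis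
    unfolding jones_JJ w s1 s2 s0_def[symmetric] JJ_rec[OF rng i]
    by (simp add: algebra_simps)
qed

lemma wop_split:
  assumes j: "j < m"
  shows "word_of_powers m i (a(j := e)) = concat (map (\<lambda>h. gen_power (i h) (a h)) [0..<j])
     @ gen_power (i j) e @ concat (map (\<lambda>h. gen_power (i h) (a h)) [Suc j..<m])"
proof -
  have u: "[0..<m] = [0..<j] @ j # [Suc j..<m]"
    using upt_add_eq_append[of 0 j "m - j"] upt_conv_Cons[of j m] j by simp
  have m1: "map (\<lambda>h. gen_power (i h) ((a(j := e)) h)) [0..<j] = map (\<lambda>h. gen_power (i h) (a h)) [0..<j]"
    by (rule map_cong) auto
  have m2: "map (\<lambda>h. gen_power (i h) ((a(j := e)) h)) [Suc j..<m] = map (\<lambda>h. gen_power (i h) (a h)) [Suc j..<m]"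
    by (rule map_cong) auto
  show ?thesis unfolding word_of_powers_def u map_append list.map concat_append concat.simps m1 m2 fun_upd_same ..
qed

lemma comb_nth: "fls_nth (XP a * f + (XP b - XP c) * g) d = fls_nth f (d - a) + fls_nth g (d - b) - fls_nth g (d - c)"
  by (simp add: left_diff_distrib XP_nth)

lemma comb_poly: "is_poly_in_s f \<Longrightarrow> is_poly_in_s g \<Longrightarrow>
   is_poly_in_s (XP 4 * f + (XP 3 - XP 1) * g) \<and> fls_nth (XP 4 * f + (XP 3 - XP 1) * g) 0 = 0"
  unfolding is_poly_in_s_def comb_nth by simp

lemma comb_poly_inv: "is_poly_in_s_inv f \<Longrightarrow> is_poly_in_s_inv g \<Longrightarrow>
   is_poly_in_s_inv (XP (-4) * f + (XP (-3) - XP (-1)) * g) \<and> fls_nth (XP (-4) * f + (XP (-3) - XP (-1)) * g) 0 = 0"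
  unfolding is_poly_in_s_inv_def comb_nth by simp

theorem proposition5p1:
  fixes n m j :: nat and i :: "nat \<Rightarrow> nat" and a :: "nat \<Rightarrow> int"
    and V :: "int \<Rightarrow> int fls"
  assumes gens: "\<And>h. h < m \<Longrightarrow> 1 \<le> i h \<and> i h < n"
    and j: "j < m"
    and V_def: "\<And>e. V e = jones n (word_of_powers m i (a(j := e)))"
  shows "(\<forall>e k::int. k \<ge> 2 \<and> is_poly_in_s (V e) \<and> is_poly_in_s (V (e + 1))
            \<longrightarrow> is_poly_in_s (V (e + k)) \<and> V (e + k) \<noteq> 1)
       \<and> (\<forall>e k::int. k \<ge> 2 \<and> is_poly_in_s_inv (V e) \<and> is_poly_in_s_inv (V (e - 1))
            \<longrightarrow> is_poly_in_s_inv (V (e - k)) \<and> V (e - k) \<noteq> 1)"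
proof -
  define P where "P = concat (map (\<lambda>h. gen_power (i h) (a h)) [0..<j])"
  define Q where "Q = concat (map (\<lambda>h. gen_power (i h) (a h)) [Suc j..<m])"
  have VV: "V e = jones n (P @ gen_power (i j) e @ Q)" for e
    unfolding V_def P_def Q_def using wop_split[OF j] by simp
  have rng: "\<forall>l\<in>set (P @ Q). 1 \<le> fst l \<and> fst l < n"
    unfolding P_def Q_def using gens j by (auto dest!: set_gp)
  have ij: "1 \<le> i j" "i j < n" using gens j by auto
  have rec: "V (e + 2) = XP 4 * V e + (XP 3 - XP 1) * V (e + 1)" for e
    unfolding VV by (rule jones_rec[OF rng ij])
  have rec2: "V (e - 2) = XP (-4) * V e + (XP (-3) - XP (-1)) * V (e - 1)" for e
  proof -
    have h: "V e = XP 4 * V (e - 2) + (XP 3 - XP 1) * V (e - 1)"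
      using rec[of "e - 2"] by simp
    have "XP (-4) * V e = V (e - 2) + (XP (-1) - XP (-3)) * V (e - 1)"
      unfolding h by (simp add: distrib_left right_diff_distrib left_diff_distrib mult.assoc[symmetric] XP_mult XP_0)
    then show ?thesis by (simp add: algebra_simps)
  qed
  have part_a: "is_poly_in_s (V (e + k)) \<and> V (e + k) \<noteq> 1"
    if k: "k \<ge> 2" and p0: "is_poly_in_s (V e)" and p1: "is_poly_in_s (V (e + 1))" for e k :: int
  proof -
    have ind: "is_poly_in_s (V (e + int kk)) \<and> is_poly_in_s (V (e + int kk + 1))" for kk :: nat
    proof (induction kk)
      case 0 then show ?case using p0 p1 by simp
    next
      case (Suc kk)
      have "V (e + int kk + 2) = XP 4 * V (e + int kk) + (XP 3 - XP 1) * V (e + int kk + 1)"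
        using rec[of "e + int kk"] by simp
      then have "is_poly_in_s (V (e + int kk + 2))"
        using Suc.IH comb_poly by simp
      moreover have e1: "e + int (Suc kk) = e + int kk + 1" and e2: "e + int kk + 1 + 1 = e + int kk + 2" by simp_all
      ultimately show ?case unfolding e1 e2 using Suc.IH by blast
    qed
    obtain kk :: nat where kk: "k = int kk + 2" using k by (metis add.commute le_add_diff_inverse zero_le_imp_eq_int diff_ge_0_iff_ge)
    have eq: "V (e + k) = XP 4 * V (e + int kk) + (XP 3 - XP 1) * V (e + int kk + 1)"
      using rec[of "e + int kk"] kk by (simp add: add.assoc)
    have c0: "fls_nth (V (e + k)) 0 = 0"
      using ind[of kk] comb_poly unfolding eq by blast
    have ek: "e + k = e + int (kk + 2)" using kk by simp
    have "is_poly_in_s (V (e + k))" using ind[of "kk + 2"] unfolding ek by blast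
    moreover have "V (e + k) \<noteq> 1"
    proof
      assume "V (e + k) = 1" then show False using c0 by simp
    qed
    ultimately show ?thesis by blast
  qed
  have part_b: "is_poly_in_s_inv (V (e - k)) \<and> V (e - k) \<noteq> 1"
    if k: "k \<ge> 2" and p0: "is_poly_in_s_inv (V e)" and p1: "is_poly_in_s_inv (V (e - 1))" for e k :: int
  proof -
    have ind: "is_poly_in_s_inv (V (e - int kk)) \<and> is_poly_in_s_inv (V (e - int kk - 1))" for kk :: nat
    proof (induction kk)
      case 0 then show ?case using p0 p1 by simp
    next
      case (Suc kk)
      have "V (e - int kk - 2) = XP (-4) * V (e - int kk) + (XP (-3) - XP (-1)) * V (e - int kk - 1)"
        using rec2[of "e - int kk"] by simp
      then have "is_poly_in_s_inv (V (e - int kk - 2))"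
        using Suc.IH comb_poly_inv by simp
      moreover have e1: "e - int (Suc kk) = e - int kk - 1" and e2: "e - int kk - 1 - 1 = e - int kk - 2" by simp_all
      ultimately show ?case unfolding e1 e2 using Suc.IH by blast
    qed
    obtain kk :: nat where kk: "k = int kk + 2" using k by (metis add.commute le_add_diff_inverse zero_le_imp_eq_int diff_ge_0_iff_ge)
    have eq: "V (e - k) = XP (-4) * V (e - int kk) + (XP (-3) - XP (-1)) * V (e - int kk - 1)"
      using rec2[of "e - int kk"] kk by (simp add: algebra_simps)
    have c0: "fls_nth (V (e - k)) 0 = 0"
      using ind[of kk] comb_poly_inv unfolding eq by blast
    have ek: "e - k = e - int (kk + 2)" using kk by simp
    have "is_poly_in_s_inv (V (e - k))" using ind[of "kk + 2"] unfolding ek by blast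
    moreover have "V (e - k) \<noteq> 1"
    proof
      assume "V (e - k) = 1" then show False using c0 by simp
    qed
    ultimately show ?thesis by blast
  qed
  show ?thesis using part_a part_b by blast
qed

end
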